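(* Let $\gamma>0$ and let $f\in\mathcal I^{\mathcal E}_\gamma$ with $\int_\gamma f=1$. For $k\in\mathbb Z_{\ge0}$ put $f_k(x)=q^{-k}f(q^{-k}x)$ (so $f_k\in\mathcal I^{\mathcal E}_\gamma$). Let $g$ be a function defined, together with all its iterated $q$-derivatives, on a domain $\Omega$, and suppose that for every $x\in\Omega$ there is $R_x>0$ with $|(\partial^kg)(x)|=O(R_x^k)$ as $k\to\infty$. Then $\lim_{l\to\infty}(f_l*_\gamma g)(x)=g(x)$ for every $x\in\Omega$. If moreover there are $C,R>0$ with $|(\partial^kg)(x)|\le CR^k$ for all $x\in\Omega$ and all $k$, the convergence is uniform on $\Omega$. In particular, if $g$ is holomorphic in a neighbourhood of $0$, then $f_l*_\gamma g\to g$ uniformly on some disk centered at $0$.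
   Context: Fix $q\in(0,1)$. Notation: $(a;q)_k=\prod_{j=0}^{k-1}(1-aq^j)$, $[k]_q!=(q;q)_k/(1-q)^k$. The $q$-derivative is $(\partial f)(x)=\frac{f(x)-f(qx)}{(1-q)x}$ (extended to $x=0$ by continuity for $f$ holomorphic near $0$). For $\gamma>0$, $L(\gamma)=\{\pm q^k\gamma:k\in\mathbb Z\}$ and $\int_\gamma f=(1-q)\sum_{k\in\mathbb Z}\sum_{\epsilon=\pm1}q^k\gamma f(\epsilon q^k\gamma)$ whenever absolutely convergent. $\mathcal I^\infty_\gamma$ is the set of functions $f$ on $L(\gamma)$ with $\int_\gamma|f(x)x^e|<\infty$ for all integers $e\ge0$. Moments: $\mu_{e,\gamma}(f)=q^{(e^2+e)/2}\int_\gamma f(x)x^e$. The $q$-moment series is $\mu_\gamma(f)(t)=\sum_{k\ge0}\mu_{k,\gamma}(f)t^k/[k]_q!$, and $\mathcal I^{\mathcal E}_\gamma$ is the set of $f\in\mathcal I^\infty_\gamma$ with $\mu_\gamma(f)$ an entire function. The $q$-convolution of $f\in\mathcal I^\infty_\gamma$ with $g$ is $(f*_\gamma g)(x)=\sum_{e\ge0}\frac{(-1)^e\mu_{e,\gamma}(f)}{[e]_q!}(\partial^eg)(x)$ at all $x$ where the $q$-derivatives are defined and the series converges absolutely. *)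

theory Defs
  imports "HOL-Analysis.Analysis"
begin

text \<open>Throughout, q is a real parameter with 0 < q < 1; functions f live on the
real lattice L(gamma) and take complex values; g is complex-valued on complex arguments.\<close>

definition qpoch :: "real \<Rightarrow> real \<Rightarrow> nat \<Rightarrow> real" where
  "qpoch a q k = (\<Prod>j<k. 1 - a * q ^ j)"

definition qfact :: "real \<Rightarrow> nat \<Rightarrow> real" where
  "qfact q k = qpoch q q k / (1 - q) ^ k"

text \<open>Summand of the q-integral over L(gamma), indexed by (k, eps) in Z x {-1,1}.\<close>
definition qint_term :: "real \<Rightarrow> real \<Rightarrow> (real \<Rightarrow> complex) \<Rightarrow> int \<times> real \<Rightarrow> complex" where
  "qint_term q \<gamma> f = (\<lambda>(k, \<epsilon>). complex_of_real (q powi k * \<gamma>) * f (\<epsilon> * q powi k * \<gamma>))"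

definition qint_abs_conv :: "real \<Rightarrow> real \<Rightarrow> (real \<Rightarrow> complex) \<Rightarrow> bool" where
  "qint_abs_conv q \<gamma> f \<longleftrightarrow> (\<lambda>p. norm (qint_term q \<gamma> f p)) summable_on (UNIV \<times> {-1, 1})"

definition qint :: "real \<Rightarrow> real \<Rightarrow> (real \<Rightarrow> complex) \<Rightarrow> complex" where
  "qint q \<gamma> f = complex_of_real (1 - q) * infsum (qint_term q \<gamma> f) (UNIV \<times> {-1, 1})"

definition I_inf :: "real \<Rightarrow> real \<Rightarrow> (real \<Rightarrow> complex) \<Rightarrow> bool" where
  "I_inf q \<gamma> f \<longleftrightarrow> (\<forall>e::nat. qint_abs_conv q \<gamma> (\<lambda>x. f x * complex_of_real (x ^ e)))"

definition qmoment :: "real \<Rightarrow> real \<Rightarrow> nat \<Rightarrow> (real \<Rightarrow> complex) \<Rightarrow> complex" where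
  "qmoment q \<gamma> e f = complex_of_real (q ^ ((e\<^sup>2 + e) div 2)) * qint q \<gamma> (\<lambda>x. f x * complex_of_real (x ^ e))"

definition I_E :: "real \<Rightarrow> real \<Rightarrow> (real \<Rightarrow> complex) \<Rightarrow> bool" where
  "I_E q \<gamma> f \<longleftrightarrow> I_inf q \<gamma> f \<and>
     (\<forall>t::complex. summable (\<lambda>k. qmoment q \<gamma> k f * t ^ k / complex_of_real (qfact q k)))"

definition qquot :: "real \<Rightarrow> (complex \<Rightarrow> complex) \<Rightarrow> complex \<Rightarrow> complex" where
  "qquot q g x = (g x - g (complex_of_real q * x)) / (complex_of_real (1 - q) * x)"

definition qder :: "real \<Rightarrow> (complex \<Rightarrow> complex) \<Rightarrow> complex \<Rightarrow> complex" where
  "qder q g x = (if x = 0 then Lim (at 0) (qquot q g) else qquot q g x)"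

definition qder_defined :: "real \<Rightarrow> (complex \<Rightarrow> complex) \<Rightarrow> complex \<Rightarrow> bool" where
  "qder_defined q g x \<longleftrightarrow> x \<noteq> 0 \<or> (\<exists>L. (qquot q g \<longlongrightarrow> L) (at 0))"

definition qconv_term :: "real \<Rightarrow> real \<Rightarrow> (real \<Rightarrow> complex) \<Rightarrow> (complex \<Rightarrow> complex) \<Rightarrow> complex \<Rightarrow> nat \<Rightarrow> complex" where
  "qconv_term q \<gamma> f g x e = (-1) ^ e * qmoment q \<gamma> e f / complex_of_real (qfact q e) * (qder q ^^ e) g x"

text \<open>q-convolution (meaningful where the series converges absolutely).\<close>
definition qconv :: "real \<Rightarrow> real \<Rightarrow> (real \<Rightarrow> complex) \<Rightarrow> (complex \<Rightarrow> complex) \<Rightarrow> complex \<Rightarrow> complex" where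
  "qconv q \<gamma> f g x = (\<Sum>e. qconv_term q \<gamma> f g x e)"

definition qdil :: "real \<Rightarrow> nat \<Rightarrow> (real \<Rightarrow> complex) \<Rightarrow> real \<Rightarrow> complex" where
  "qdil q k f x = complex_of_real (inverse (q ^ k)) * f (x / q ^ k)"

end

theory Submission
  imports Defs "HOL-Complex_Analysis.Complex_Analysis"
begin


lemma powi_shift:
  assumes "q \<noteq> (0::real)"
  shows "q powi k = q ^ l * q powi (k - int l)"
proof -
  have "q powi k = q powi (int l + (k - int l))" by simp
  also have "\<dots> = q powi (int l) * q powi (k - int l)" using assms by (intro power_int_add) simp
  finally show ?thesis by (simp add: power_int_of_nat)
qed

lemma qmoment_qdil:
  assumes q: "0 < q"
  shows "qmoment q \<gamma> e (qdil q l f) = complex_of_real (q ^ (l * e)) * qmoment q \<gamma> e f"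
proof -
  define T where "T = qint_term q \<gamma> (\<lambda>x. f x * complex_of_real (x ^ e))"
  define h where "h = (\<lambda>p::int\<times>real. (fst p - int l, snd p))"
  have pt: "qint_term q \<gamma> (\<lambda>x. qdil q l f x * complex_of_real (x ^ e)) p
        = complex_of_real (q ^ (l * e)) * T (h p)" for p
  proof -
    obtain k \<epsilon> where p: "p = (k, \<epsilon>)" by force
    have s: "q powi k = q ^ l * q powi (k - int l)" using q by (intro powi_shift) auto
    have ql: "q ^ l \<noteq> 0" using q by simp
    have a: "\<epsilon> * q powi k * \<gamma> / q ^ l = \<epsilon> * q powi (k - int l) * \<gamma>"
      using ql q by (simp add: s)
    have b: "(\<epsilon> * q powi k * \<gamma>) ^ e = q ^ (l*e) * (\<epsilon> * q powi (k - int l) * \<gamma>) ^ e"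
      by (simp add: s power_mult_distrib power_mult)
    have c: "q powi k * \<gamma> * inverse (q ^ l) = q powi (k - int l) * \<gamma>"
      using ql by (simp add: s)
    have "qint_term q \<gamma> (\<lambda>x. qdil q l f x * complex_of_real (x ^ e)) p
       = complex_of_real (q powi k * \<gamma>) * (complex_of_real (inverse (q ^ l)) *
           f (\<epsilon> * q powi (k - int l) * \<gamma>) * complex_of_real (q ^ (l*e) * (\<epsilon> * q powi (k - int l) * \<gamma>) ^ e))"
      unfolding p qint_term_def qdil_def by (simp only: a b prod.case)
    also have "\<dots> = complex_of_real (q ^ (l*e)) * (complex_of_real (q powi k * \<gamma> * inverse (q ^ l)) *
           (f (\<epsilon> * q powi (k - int l) * \<gamma>) * complex_of_real ((\<epsilon> * q powi (k - int l) * \<gamma>) ^ e)))"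
      by (simp only: of_real_mult mult_ac)
    also have "\<dots> = complex_of_real (q ^ (l * e)) * T (h p)"
      unfolding c T_def h_def p qint_term_def by simp
    finally show ?thesis .
  qed
  have bij: "bij_betw h (UNIV \<times> {-1, 1}) (UNIV \<times> {-1, 1})"
    unfolding h_def
    by (rule bij_betwI[where g="\<lambda>p. (fst p + int l, snd p)"]) auto
  have "infsum (qint_term q \<gamma> (\<lambda>x. qdil q l f x * complex_of_real (x ^ e))) (UNIV \<times> {-1, 1})
      = complex_of_real (q ^ (l * e)) * infsum (\<lambda>p. T (h p)) (UNIV \<times> {-1, 1})"
    unfolding pt by (rule infsum_cmult_right')
  also have "infsum (\<lambda>p. T (h p)) (UNIV \<times> {-1, 1}) = infsum T (UNIV \<times> {-1, 1})"
    by (rule infsum_reindex_bij_betw[OF bij])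
  finally show ?thesis
    unfolding qmoment_def qint_def T_def by (simp add: algebra_simps)
qed



definition cc :: "real \<Rightarrow> real \<Rightarrow> (real \<Rightarrow> complex) \<Rightarrow> nat \<Rightarrow> complex" where
  "cc q \<gamma> f e = qmoment q \<gamma> e f / complex_of_real (qfact q e)"

lemma qconv_term_dil:
  assumes q: "0 < q"
  shows "qconv_term q \<gamma> (qdil q l f) g x e
     = (-1) ^ e * complex_of_real (q ^ (l * e)) * cc q \<gamma> f e * (qder q ^^ e) g x"
  unfolding qconv_term_def cc_def qmoment_qdil[OF q] by simp

lemma norm_qconv_term_dil:
  assumes q: "0 < q"
  shows "norm (qconv_term q \<gamma> (qdil q l f) g x e)
     = q ^ (l * e) * (norm (cc q \<gamma> f e) * norm ((qder q ^^ e) g x))"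
  unfolding qconv_term_dil[OF q] using q by (simp add: norm_mult norm_power)

lemma core:
  assumes q: "0 < q" "q < 1" and f1: "qint q \<gamma> f = 1"
    and D: "\<And>e. norm ((qder q ^^ e) g x) \<le> D e"
    and S: "summable (\<lambda>e. norm (cc q \<gamma> f e) * D e)"
  shows "summable (\<lambda>e. norm (qconv_term q \<gamma> (qdil q l f) g x e))"
    and "norm (qconv q \<gamma> (qdil q l f) g x - g x) \<le> q ^ l * (\<Sum>e. norm (cc q \<gamma> f e) * D e)"
proof -
  define t where "t = qconv_term q \<gamma> (qdil q l f) g x"
  have nt: "norm (t e) \<le> q ^ l * (norm (cc q \<gamma> f e) * D e)" if "e > 0" for e
  proof -
    have A1: "q ^ (l * e) \<le> q ^ l" using q that by (intro power_decreasing) auto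
    have A2: "norm (cc q \<gamma> f e) * norm ((qder q ^^ e) g x) \<le> norm (cc q \<gamma> f e) * D e"
      by (intro mult_left_mono D) auto
    show ?thesis unfolding t_def norm_qconv_term_dil[OF q(1)]
      using mult_mono[OF A1 A2] q by simp
  qed
  have nt0: "norm (t e) \<le> norm (cc q \<gamma> f e) * D e" for e
  proof -
    have A1: "q ^ (l * e) \<le> 1" using q by (intro power_le_one) auto
    have A2: "norm (cc q \<gamma> f e) * norm ((qder q ^^ e) g x) \<le> norm (cc q \<gamma> f e) * D e"
      by (intro mult_left_mono D) auto
    show ?thesis unfolding t_def norm_qconv_term_dil[OF q(1)]
      using mult_mono[OF A1 A2] by simp
  qed
  have st: "summable (\<lambda>e. norm (t e))"
    by (rule summable_comparison_test[OF _ S]) (use nt0 in auto)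
  then show "summable (\<lambda>e. norm (qconv_term q \<gamma> (qdil q l f) g x e))" unfolding t_def .
  have t0: "t 0 = g x"
    unfolding t_def qconv_term_def qmoment_qdil[OF q(1)]
    by (simp add: qmoment_def f1 qfact_def qpoch_def)
  have sumt: "summable t" using st summable_norm_cancel by blast
  have "qconv q \<gamma> (qdil q l f) g x - g x = (\<Sum>e. t (Suc e))"
    unfolding qconv_def t_def[symmetric] using suminf_split_head[OF sumt] t0 by simp
  also have "norm \<dots> \<le> (\<Sum>e. norm (t (Suc e)))"
    by (rule summable_norm) (use st in \<open>subst summable_Suc_iff\<close>)
  also have "\<dots> \<le> (\<Sum>e. q ^ l * (norm (cc q \<gamma> f (Suc e)) * D (Suc e)))"
  proof (rule suminf_le)
    show "norm (t (Suc e)) \<le> q ^ l * (norm (cc q \<gamma> f (Suc e)) * D (Suc e))" for e by (rule nt) simp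
    show "summable (\<lambda>e. norm (t (Suc e)))" using st by (subst summable_Suc_iff)
    have "summable (\<lambda>e. norm (cc q \<gamma> f (Suc e)) * D (Suc e))" using S by (subst summable_Suc_iff)
    then show "summable (\<lambda>e. q ^ l * (norm (cc q \<gamma> f (Suc e)) * D (Suc e)))" by (rule summable_mult)
  qed
  also have "\<dots> = q ^ l * (\<Sum>e. norm (cc q \<gamma> f (Suc e)) * D (Suc e))"
    by (rule suminf_mult) (use S in \<open>subst summable_Suc_iff\<close>)
  also have "\<dots> \<le> q ^ l * (\<Sum>e. norm (cc q \<gamma> f e) * D e)"
  proof -
    have "(\<Sum>e. norm (cc q \<gamma> f (Suc e)) * D (Suc e)) = (\<Sum>e. norm (cc q \<gamma> f e) * D e) - norm (cc q \<gamma> f 0) * D 0"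
      by (rule suminf_split_head[OF S])
    moreover have "0 \<le> norm (cc q \<gamma> f 0) * D 0" using order_trans[OF norm_ge_zero D[of 0]] by (intro mult_nonneg_nonneg) simp_all
    ultimately show ?thesis using q by (intro mult_left_mono) auto
  qed
  finally show "norm (qconv q \<gamma> (qdil q l f) g x - g x) \<le> q ^ l * (\<Sum>e. norm (cc q \<gamma> f e) * D e)" .
qed

lemma cc_abs_summable:
  assumes f: "I_E q \<gamma> f" and R: "R \<ge> 0"
  shows "summable (\<lambda>e. norm (cc q \<gamma> f e) * R ^ e)"
proof -
  have "summable (\<lambda>k. cc q \<gamma> f k * complex_of_real (R + 1) ^ k)"
  proof -
    have "summable (\<lambda>k. qmoment q \<gamma> k f * complex_of_real (R + 1) ^ k / complex_of_real (qfact q k))"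
      using f unfolding I_E_def by blast
    then show ?thesis unfolding cc_def by (simp add: mult_ac divide_inverse)
  qed
  from powser_insidea[OF this, of "complex_of_real R"]
  have "summable (\<lambda>n. norm (cc q \<gamma> f n * complex_of_real R ^ n))" using R by simp
  then show ?thesis using R by (simp add: norm_mult norm_power)
qed



lemma part1:
  assumes q: "0 < q" "q < 1" and f: "I_E q \<gamma> f" and f1: "qint q \<gamma> f = 1"
    and R: "R > 0" and ev: "\<forall>\<^sub>F k in sequentially. norm ((qder q ^^ k) g x) \<le> C * R ^ k"
  shows "(\<forall>l. summable (\<lambda>e. norm (qconv_term q \<gamma> (qdil q l f) g x e))) \<and>
         (\<lambda>l. qconv q \<gamma> (qdil q l f) g x) \<longlonglongrightarrow> g x"
proof -
  define D where "D e = norm ((qder q ^^ e) g x)" for e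
  have S: "summable (\<lambda>e. norm (cc q \<gamma> f e) * D e)"
  proof (rule summable_comparison_test_ev)
    show "\<forall>\<^sub>F e in sequentially. norm (norm (cc q \<gamma> f e) * D e) \<le> C * (norm (cc q \<gamma> f e) * R ^ e)"
      using ev
    proof (rule eventually_mono)
      fix e assume "norm ((qder q ^^ e) g x) \<le> C * R ^ e"
      then have "norm (cc q \<gamma> f e) * D e \<le> norm (cc q \<gamma> f e) * (C * R ^ e)"
        unfolding D_def by (intro mult_left_mono) auto
      then show "norm (norm (cc q \<gamma> f e) * D e) \<le> C * (norm (cc q \<gamma> f e) * R ^ e)"
        unfolding D_def by (simp add: mult_ac)
    qed
    show "summable (\<lambda>e. C * (norm (cc q \<gamma> f e) * R ^ e))"
      by (rule summable_mult) (rule cc_abs_summable[OF f], use R in simp)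
  qed
  have D: "norm ((qder q ^^ e) g x) \<le> D e" for e unfolding D_def by simp
  note c = core[OF q f1 D S]
  have lim0: "(\<lambda>l. q ^ l * (\<Sum>e. norm (cc q \<gamma> f e) * D e)) \<longlonglongrightarrow> 0"
    by (rule tendsto_mult_left_zero) (rule LIMSEQ_power_zero, use q in simp)
  have "(\<lambda>l. qconv q \<gamma> (qdil q l f) g x - g x) \<longlonglongrightarrow> 0"
    by (rule Lim_null_comparison[OF _ lim0]) (use c(2) in auto)
  then show ?thesis using c(1) by (simp add: LIM_zero_iff)
qed

lemma part2:
  assumes q: "0 < q" "q < 1" and f: "I_E q \<gamma> f" and f1: "qint q \<gamma> f = 1"
    and B: "\<exists>C>0. \<exists>R>0. \<forall>x\<in>\<Omega>. \<forall>k. norm ((qder q ^^ k) g x) \<le> C * R ^ k"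
  shows "(\<forall>x\<in>\<Omega>. \<forall>l. summable (\<lambda>e. norm (qconv_term q \<gamma> (qdil q l f) g x e))) \<and>
         uniform_limit \<Omega> (\<lambda>l. qconv q \<gamma> (qdil q l f) g) g sequentially"
proof -
  obtain C R where C: "C > 0" and R: "R > 0" and bd: "\<And>x k. x \<in> \<Omega> \<Longrightarrow> norm ((qder q ^^ k) g x) \<le> C * R ^ k"
    using B by blast
  define D where "D e = C * R ^ e" for e
  have S: "summable (\<lambda>e. norm (cc q \<gamma> f e) * D e)"
    unfolding D_def using summable_mult[OF cc_abs_summable[OF f, of R], of C] R
    by (simp add: mult_ac)
  define S0 where "S0 = (\<Sum>e. norm (cc q \<gamma> f e) * D e)"
  have c1: "summable (\<lambda>e. norm (qconv_term q \<gamma> (qdil q l f) g x e))" if "x \<in> \<Omega>" for x l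
    using core(1)[OF q f1 bd[OF that] S[unfolded D_def]] .
  have c2: "norm (qconv q \<gamma> (qdil q l f) g x - g x) \<le> q ^ l * S0" if "x \<in> \<Omega>" for x l
    using core(2)[OF q f1 bd[OF that] S[unfolded D_def]] unfolding S0_def D_def .
  have lim0: "(\<lambda>l. q ^ l * S0) \<longlonglongrightarrow> 0"
    by (rule tendsto_mult_left_zero) (rule LIMSEQ_power_zero, use q in simp)
  have "uniform_limit \<Omega> (\<lambda>l. qconv q \<gamma> (qdil q l f) g) g sequentially"
  proof (rule uniform_limitI)
    fix \<epsilon> :: real assume "0 < \<epsilon>"
    with lim0 have "\<forall>\<^sub>F l in sequentially. q ^ l * S0 < \<epsilon>" by (rule order_tendstoD(2))
    then show "\<forall>\<^sub>F l in sequentially. \<forall>x\<in>\<Omega>. dist (qconv q \<gamma> (qdil q l f) g x) (g x) < \<epsilon>"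
    proof (rule eventually_mono)
      fix l assume "q ^ l * S0 < \<epsilon>"
      then show "\<forall>x\<in>\<Omega>. dist (qconv q \<gamma> (qdil q l f) g x) (g x) < \<epsilon>"
        using c2 by (auto simp: dist_norm intro: le_less_trans)
    qed
  qed
  then show ?thesis using c1 by blast
qed



definition qn :: "real \<Rightarrow> nat \<Rightarrow> real" where "qn q n = (1 - q ^ n) / (1 - q)"

lemma qn_bounds:
  assumes "0 < q" "q < 1"
  shows "0 \<le> qn q n" "qn q n \<le> 1 / (1 - q)"
proof -
  have "q ^ n \<le> 1" "0 \<le> q ^ n" using assms by (auto intro: power_le_one)
  then show "0 \<le> qn q n" "qn q n \<le> 1 / (1 - q)" unfolding qn_def using assms
    by (auto intro: divide_right_mono divide_nonneg_pos)
qed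

lemma powser_bound_summable:
  fixes b :: "nat \<Rightarrow> complex"
  assumes \<rho>: "\<rho> > 0" and bd: "\<And>n. norm (b n) \<le> K / \<rho> ^ n" and x: "norm x < \<rho>"
  shows "summable (\<lambda>n. norm (b n * x ^ n))"
    and "norm (\<Sum>n. b n * x ^ n) \<le> K * (\<Sum>n. (norm x / \<rho>) ^ n)"
proof -
  have K: "K \<ge> 0" using order_trans[OF norm_ge_zero bd[of 0]] by simp
  have le: "norm (b n * x ^ n) \<le> K * (norm x / \<rho>) ^ n" for n
  proof -
    have "norm (b n * x ^ n) = norm (b n) * norm x ^ n" by (simp add: norm_mult norm_power)
    also have "\<dots> \<le> K / \<rho> ^ n * norm x ^ n" by (intro mult_right_mono bd) auto
    also have "\<dots> = K * (norm x / \<rho>) ^ n" by (simp add: power_divide)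
    finally show ?thesis .
  qed
  have g: "summable (\<lambda>n. K * (norm x / \<rho>) ^ n)"
    using x \<rho> by (intro summable_mult summable_geometric) auto
  show s: "summable (\<lambda>n. norm (b n * x ^ n))"
    by (rule summable_comparison_test[OF _ g]) (use le in auto)
  have "norm (\<Sum>n. b n * x ^ n) \<le> (\<Sum>n. norm (b n * x ^ n))" by (rule summable_norm[OF s])
  also have "\<dots> \<le> (\<Sum>n. K * (norm x / \<rho>) ^ n)" by (rule suminf_le[OF le s g])
  also have "\<dots> = K * (\<Sum>n. (norm x / \<rho>) ^ n)"
    by (rule suminf_mult) (use x \<rho> in \<open>intro summable_geometric, auto\<close>)
  finally show "norm (\<Sum>n. b n * x ^ n) \<le> K * (\<Sum>n. (norm x / \<rho>) ^ n)" .
qed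

lemma qder_series:
  fixes b :: "nat \<Rightarrow> complex" and h :: "complex \<Rightarrow> complex"
  assumes q: "0 < q" "q < 1" and \<rho>: "\<rho> > 0" and bd: "\<And>n. norm (b n) \<le> K / \<rho> ^ n"
    and hx: "\<And>x. x \<in> ball 0 \<rho> \<Longrightarrow> h x = (\<Sum>n. b n * x ^ n)"
    and x: "x \<in> ball 0 \<rho>"
  shows "qder q h x = (\<Sum>n. (b (Suc n) * complex_of_real (qn q (Suc n))) * x ^ n)"
proof -
  define b' where "b' n = b (Suc n) * complex_of_real (qn q (Suc n))" for n
  have K: "K \<ge> 0" using order_trans[OF norm_ge_zero bd[of 0]] by simp
  have bd': "norm (b' n) \<le> (K / (\<rho> * (1 - q))) / \<rho> ^ n" for n
  proof -
    have "norm (b' n) = norm (b (Suc n)) * qn q (Suc n)"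
      unfolding b'_def using qn_bounds(1)[OF q] by (simp add: norm_mult)
    also have "\<dots> \<le> K / \<rho> ^ Suc n * (1 / (1 - q))"
      by (intro mult_mono bd qn_bounds q) (use K \<rho> in auto)
    also have "\<dots> = (K / (\<rho> * (1 - q))) / \<rho> ^ n" by (simp add: field_simps)
    finally show ?thesis .
  qed
  have sums_h: "(\<lambda>n. b n * y ^ n) sums h y" if "y \<in> ball 0 \<rho>" for y
  proof -
    have "summable (\<lambda>n. b n * y ^ n)"
      using powser_bound_summable(1)[OF \<rho> bd, of y] that summable_norm_cancel by auto
    then show ?thesis using hx[OF that] by (simp add: summable_sums)
  qed
  have quot: "qquot q h y = (\<Sum>n. b' n * y ^ n)" if y: "y \<in> ball 0 \<rho>" "y \<noteq> 0" for y
  proof -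
    have qy: "complex_of_real q * y \<in> ball 0 \<rho>"
    proof -
      have A: "q * norm y \<le> norm y" using q by (intro mult_left_le_one_le) auto
      have n: "norm (complex_of_real q * y) = q * norm y" using q by (simp add: norm_mult)
      have "norm y < \<rho>" using y(1) by simp
      then have "norm (complex_of_real q * y) < \<rho>" using A n by linarith
      then show ?thesis by simp
    qed
    have "(\<lambda>n. b n * y ^ n - b n * (complex_of_real q * y) ^ n) sums (h y - h (complex_of_real q * y))"
      by (intro sums_diff sums_h y qy)
    then have "(\<lambda>n. b (Suc n) * y ^ Suc n - b (Suc n) * (complex_of_real q * y) ^ Suc n) sums (h y - h (complex_of_real q * y))"
      by (subst sums_Suc_iff) simp
    moreover have "b (Suc n) * y ^ Suc n - b (Suc n) * (complex_of_real q * y) ^ Suc n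
        = (complex_of_real (1 - q) * y) * (b' n * y ^ n)" for n
    proof -
      have E: "complex_of_real (1 - q) * complex_of_real (qn q (Suc n)) = 1 - complex_of_real q ^ Suc n"
        unfolding of_real_mult[symmetric] qn_def using q by simp
      have "(complex_of_real (1 - q) * y) * (b' n * y ^ n)
          = b (Suc n) * y ^ Suc n * (complex_of_real (1 - q) * complex_of_real (qn q (Suc n)))"
        unfolding b'_def by (simp only: power_Suc mult_ac)
      also have "\<dots> = b (Suc n) * y ^ Suc n - b (Suc n) * (complex_of_real q * y) ^ Suc n"
        unfolding E by (simp only: power_mult_distrib algebra_simps mult_1_left)
      finally show ?thesis by simp
    qed
    ultimately have "(\<lambda>n. (complex_of_real (1 - q) * y) * (b' n * y ^ n)) sums (h y - h (complex_of_real q * y))"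
      by simp
    moreover have nz: "complex_of_real (1 - q) * y \<noteq> 0" using q y by simp
    ultimately have "(\<lambda>n. b' n * y ^ n) sums ((h y - h (complex_of_real q * y)) / (complex_of_real (1 - q) * y))"
      using sums_mult_iff[OF nz, of "\<lambda>n. b' n * y ^ n" "(h y - h (complex_of_real q * y)) / (complex_of_real (1 - q) * y)"]
      by simp
    then show ?thesis unfolding qquot_def by (simp add: sums_iff)
  qed
  show ?thesis
  proof (cases "x = 0")
    case False
    then show ?thesis using quot[OF x] unfolding qder_def b'_def by simp
  next
    case True
    define P where "P y = (\<Sum>n. b' n * y ^ n)" for y
    have sK: "summable (\<lambda>n. b' n * complex_of_real (\<rho> / 2) ^ n)"
      using powser_bound_summable(1)[OF \<rho> bd', of "complex_of_real (\<rho> / 2)"] \<rho> summable_norm_cancel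
      by auto
    have "isCont P 0" unfolding P_def
      by (rule isCont_powser[OF sK]) (use \<rho> in simp)
    then have lP: "(P \<longlongrightarrow> P 0) (at 0)" by (simp add: isCont_def)
    have ev: "\<forall>\<^sub>F y in at 0. P y = qquot q h y"
      unfolding eventually_at
      by (rule exI[of _ \<rho>]) (use \<rho> quot in \<open>auto simp: P_def dist_norm\<close>)
    have "(qquot q h \<longlongrightarrow> P 0) (at 0)" by (rule Lim_transform_eventually[OF lP ev])
    then have "Lim (at 0) (qquot q h) = P 0" by (intro tendsto_Lim) auto
    then show ?thesis using True unfolding qder_def P_def b'_def by simp
  qed
qed



primrec coef :: "real \<Rightarrow> (nat \<Rightarrow> complex) \<Rightarrow> nat \<Rightarrow> nat \<Rightarrow> complex" where
  "coef q a 0 = a"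
| "coef q a (Suc k) = (\<lambda>n. coef q a k (Suc n) * complex_of_real (qn q (Suc n)))"

lemma shift_bound:
  fixes b :: "nat \<Rightarrow> complex"
  assumes q: "0 < q" "q < 1" and \<rho>: "\<rho> > 0" and bd: "\<And>n. norm (b n) \<le> K / \<rho> ^ n"
  shows "norm (b (Suc n) * complex_of_real (qn q (Suc n))) \<le> (K / (\<rho> * (1 - q))) / \<rho> ^ n"
proof -
  have K: "K \<ge> 0" using order_trans[OF norm_ge_zero bd[of 0]] by simp
  have "norm (b (Suc n) * complex_of_real (qn q (Suc n))) = norm (b (Suc n)) * qn q (Suc n)"
    using qn_bounds(1)[OF q] by (simp add: norm_mult)
  also have "\<dots> \<le> K / \<rho> ^ Suc n * (1 / (1 - q))"
    by (intro mult_mono bd qn_bounds q) (use K \<rho> in auto)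
  also have "\<dots> = (K / (\<rho> * (1 - q))) / \<rho> ^ n" by (simp add: field_simps)
  finally show ?thesis .
qed

lemma iter:
  fixes a :: "nat \<Rightarrow> complex" and g :: "complex \<Rightarrow> complex"
  assumes q: "0 < q" "q < 1" and \<rho>: "\<rho> > 0" and bd: "\<And>n. norm (a n) \<le> B / \<rho> ^ n"
    and gx: "\<And>x. x \<in> ball 0 \<rho> \<Longrightarrow> g x = (\<Sum>n. a n * x ^ n)"
  shows "(\<forall>n. norm (coef q a k n) \<le> (B * (1 / (\<rho> * (1 - q))) ^ k) / \<rho> ^ n) \<and>
         (\<forall>x\<in>ball 0 \<rho>. (qder q ^^ k) g x = (\<Sum>n. coef q a k n * x ^ n))"
proof (induction k)
  case 0
  then show ?case using bd gx by simp
next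
  case (Suc k)
  have b1: "\<And>n. norm (coef q a k n) \<le> (B * (1 / (\<rho> * (1 - q))) ^ k) / \<rho> ^ n"
    using Suc.IH by blast
  have e1: "\<And>x. x \<in> ball 0 \<rho> \<Longrightarrow> (qder q ^^ k) g x = (\<Sum>n. coef q a k n * x ^ n)"
    using Suc.IH by blast
  have "norm (coef q a (Suc k) n) \<le> (B * (1 / (\<rho> * (1 - q))) ^ Suc k) / \<rho> ^ n" for n
  proof -
    have "norm (coef q a (Suc k) n) \<le> ((B * (1 / (\<rho> * (1 - q))) ^ k) / (\<rho> * (1 - q))) / \<rho> ^ n"
      using shift_bound[OF q \<rho> b1] by simp
    also have "(B * (1 / (\<rho> * (1 - q))) ^ k) / (\<rho> * (1 - q)) = B * (1 / (\<rho> * (1 - q))) ^ Suc k"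
      by (simp add: field_simps)
    finally show ?thesis .
  qed
  moreover have "(qder q ^^ Suc k) g x = (\<Sum>n. coef q a (Suc k) n * x ^ n)" if x: "x \<in> ball 0 \<rho>" for x
  proof -
    have "(qder q ^^ Suc k) g x = qder q ((qder q ^^ k) g) x" by simp
    also have "\<dots> = (\<Sum>n. (coef q a k (Suc n) * complex_of_real (qn q (Suc n))) * x ^ n)"
      by (rule qder_series[OF q \<rho> b1 e1 x])
    finally show ?thesis by simp
  qed
  ultimately show ?case by blast
qed

lemma part3:
  assumes q: "0 < q" "q < 1" and f: "I_E q \<gamma> f" and f1: "qint q \<gamma> f = 1"
    and U: "open U" "0 \<in> U" "g holomorphic_on U"
  shows "\<exists>r>0. (\<forall>x\<in>ball 0 r. \<forall>l. summable (\<lambda>e. norm (qconv_term q \<gamma> (qdil q l f) g x e))) \<and>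
                 uniform_limit (ball 0 r) (\<lambda>l. qconv q \<gamma> (qdil q l f) g) g sequentially"
proof -
  obtain \<epsilon> where \<epsilon>: "\<epsilon> > 0" "ball 0 \<epsilon> \<subseteq> U" using U(1,2) openE by blast
  define \<rho> where "\<rho> = \<epsilon> / 2"
  have \<rho>: "\<rho> > 0" using \<epsilon> by (simp add: \<rho>_def)
  have hol: "g holomorphic_on ball 0 \<epsilon>" using U(3) \<epsilon>(2) by (rule holomorphic_on_subset)
  have sub: "cball 0 \<rho> \<subseteq> ball 0 \<epsilon>" using \<epsilon> by (auto simp: \<rho>_def)
  have holr: "g holomorphic_on ball 0 \<rho>" using hol by (rule holomorphic_on_subset) (use sub in auto)
  have cont: "continuous_on (cball 0 \<rho>) g"
    using holomorphic_on_imp_continuous_on[OF hol] sub by (rule continuous_on_subset)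
  have "compact (g ` cball 0 \<rho>)" by (rule compact_continuous_image[OF cont compact_cball])
  then obtain B where B: "B > 0" "\<And>y. y \<in> g ` cball 0 \<rho> \<Longrightarrow> norm y \<le> B"
    using compact_imp_bounded bounded_pos by metis
  define a where "a n = (deriv ^^ n) g 0 / fact n" for n
  have bd: "norm (a n) \<le> B / \<rho> ^ n" for n
  proof -
    have "norm ((deriv ^^ n) g 0) \<le> fact n * B / \<rho> ^ n"
      by (rule Cauchy_inequality[OF holr cont \<rho>]) (use B in auto)
    then show ?thesis unfolding a_def by (simp add: norm_divide field_simps)
  qed
  have gx: "g x = (\<Sum>n. a n * x ^ n)" if "x \<in> ball 0 \<rho>" for x
  proof -
    have "x \<in> ball 0 \<epsilon>" using that \<epsilon> by (auto simp: \<rho>_def)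
    from holomorphic_power_series[OF hol this] show ?thesis
      unfolding a_def by (simp add: sums_iff)
  qed
  define R where "R = 1 / (\<rho> * (1 - q))"
  have R: "R > 0" using \<rho> q by (simp add: R_def)
  have bound: "norm ((qder q ^^ k) g x) \<le> (2 * B + 1) * R ^ k" if x: "x \<in> ball 0 (\<rho> / 2)" for x k
  proof -
    note it = iter[OF q \<rho> bd gx, of k]
    have nx: "norm x < \<rho> / 2" using x by simp
    have xr: "x \<in> ball 0 \<rho>" using nx \<rho> by simp
    have c1: "\<And>n. norm (coef q a k n) \<le> (B * R ^ k) / \<rho> ^ n" using it unfolding R_def by blast
    have "norm ((qder q ^^ k) g x) = norm (\<Sum>n. coef q a k n * x ^ n)" using it xr by simp
    also have "\<dots> \<le> (B * R ^ k) * (\<Sum>n. (norm x / \<rho>) ^ n)"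
      by (rule powser_bound_summable(2)[OF \<rho> c1]) (use nx norm_ge_zero[of x] in linarith)
    also have "(\<Sum>n. (norm x / \<rho>) ^ n) = 1 / (1 - norm x / \<rho>)"
      by (rule suminf_geometric) (use nx \<rho> in simp)
    also have "\<dots> \<le> 2"
    proof -
      have t: "norm x / \<rho> < 1 / 2" using nx \<rho> by (simp add: field_simps)
      then have p: "1 - norm x / \<rho> > 0" by linarith
      have "1 \<le> 2 * (1 - norm x / \<rho>)" using t by (simp add: algebra_simps)
      then show ?thesis by (subst pos_divide_le_eq[OF p])
    qed
    finally have "norm ((qder q ^^ k) g x) \<le> B * R ^ k * 2"
      using B R by (simp add: mult_left_mono)
    also have "\<dots> \<le> (2 * B + 1) * R ^ k" using R by (simp add: algebra_simps)
    finally show ?thesis .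
  qed
  have "\<exists>C>0. \<exists>R>0. \<forall>x\<in>ball 0 (\<rho> / 2). \<forall>k. norm ((qder q ^^ k) g x) \<le> C * R ^ k"
    using bound B R by (intro exI[of _ "2 * B + 1"] conjI exI[of _ R]) auto
  from part2[OF q f f1 this] show ?thesis using \<rho> by (intro exI[of _ "\<rho> / 2"]) auto
qed


theorem proposition3p5:
  fixes q \<gamma> :: real and f :: "real \<Rightarrow> complex"
    and g :: "complex \<Rightarrow> complex" and \<Omega> :: "complex set"
  assumes q: "0 < q" "q < 1"
    and \<gamma>: "0 < \<gamma>"
    and f: "I_E q \<gamma> f"
    and f1: "qint q \<gamma> f = 1"
  shows
    "((\<forall>k. \<forall>x\<in>\<Omega>. qder_defined q ((qder q ^^ k) g) x) \<and>
      (\<forall>x\<in>\<Omega>. \<exists>R>0. \<exists>C. \<forall>\<^sub>F k in sequentially. norm ((qder q ^^ k) g x) \<le> C * R ^ k)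
      \<longrightarrow> (\<forall>x\<in>\<Omega>. (\<forall>l. summable (\<lambda>e. norm (qconv_term q \<gamma> (qdil q l f) g x e))) \<and>
              (\<lambda>l. qconv q \<gamma> (qdil q l f) g x) \<longlonglongrightarrow> g x))
    \<and> ((\<forall>k. \<forall>x\<in>\<Omega>. qder_defined q ((qder q ^^ k) g) x) \<and>
      (\<exists>C>0. \<exists>R>0. \<forall>x\<in>\<Omega>. \<forall>k. norm ((qder q ^^ k) g x) \<le> C * R ^ k)
      \<longrightarrow> uniform_limit \<Omega> (\<lambda>l. qconv q \<gamma> (qdil q l f) g) g sequentially)
    \<and> ((\<exists>U. open U \<and> 0 \<in> U \<and> g holomorphic_on U)
      \<longrightarrow> (\<exists>r>0. (\<forall>x\<in>ball 0 r. \<forall>l. summable (\<lambda>e. norm (qconv_term q \<gamma> (qdil q l f) g x e))) \<and>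
                 uniform_limit (ball 0 r) (\<lambda>l. qconv q \<gamma> (qdil q l f) g) g sequentially))"
  proof (intro conjI impI)
  assume h: "(\<forall>k. \<forall>x\<in>\<Omega>. qder_defined q ((qder q ^^ k) g) x) \<and>
      (\<forall>x\<in>\<Omega>. \<exists>R>0. \<exists>C. \<forall>\<^sub>F k in sequentially. norm ((qder q ^^ k) g x) \<le> C * R ^ k)"
  show "\<forall>x\<in>\<Omega>. (\<forall>l. summable (\<lambda>e. norm (qconv_term q \<gamma> (qdil q l f) g x e))) \<and>
              (\<lambda>l. qconv q \<gamma> (qdil q l f) g x) \<longlonglongrightarrow> g x"
  proof
    fix x assume "x \<in> \<Omega>"
    with h obtain R C where "R > 0" "\<forall>\<^sub>F k in sequentially. norm ((qder q ^^ k) g x) \<le> C * R ^ k"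
      by blast
    from part1[OF q f f1 this] show "(\<forall>l. summable (\<lambda>e. norm (qconv_term q \<gamma> (qdil q l f) g x e))) \<and>
              (\<lambda>l. qconv q \<gamma> (qdil q l f) g x) \<longlonglongrightarrow> g x" .
  qed
next
  assume h: "(\<forall>k. \<forall>x\<in>\<Omega>. qder_defined q ((qder q ^^ k) g) x) \<and>
      (\<exists>C>0. \<exists>R>0. \<forall>x\<in>\<Omega>. \<forall>k. norm ((qder q ^^ k) g x) \<le> C * R ^ k)"
  then have "\<exists>C>0. \<exists>R>0. \<forall>x\<in>\<Omega>. \<forall>k. norm ((qder q ^^ k) g x) \<le> C * R ^ k" by blast
  from part2[OF q f f1 this] show "uniform_limit \<Omega> (\<lambda>l. qconv q \<gamma> (qdil q l f) g) g sequentially" by blast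
next
  assume "\<exists>U. open U \<and> 0 \<in> U \<and> g holomorphic_on U"
  then obtain U where "open U" "0 \<in> U" "g holomorphic_on U" by blast
  from part3[OF q f f1 this] show "\<exists>r>0. (\<forall>x\<in>ball 0 r. \<forall>l. summable (\<lambda>e. norm (qconv_term q \<gamma> (qdil q l f) g x e))) \<and>
                 uniform_limit (ball 0 r) (\<lambda>l. qconv q \<gamma> (qdil q l f) g) g sequentially" .
qed

end
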